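(* Let $F=\langle f_1,\ldots,f_k\rangle$ be a normalized solution to an instance $(\mathcal{T}_{initial},\mathcal{T}_{final},k)$ of Flip Distance, and let $C$ be a component of $\mathcal{D}_F$. Let $f_i$ and $f_h$, with $i<h$, be two flips in $C$ such that $\phi(f_h)=\epsilon(f_i)$ and $\epsilon(f_i)$ is not flipped between $f_i$ and $f_h$ (i.e., there is no $p$ with $i<p<h$ and $\epsilon(f_p)=\epsilon(f_i)$). Then there is a directed path from $f_i$ to $f_h$ in $C$.
   Context: A triangulation of a finite point set $\mathcal{P}$ in the plane is a partition of the convex hull of $\mathcal{P}$ into triangles whose vertex set is $\mathcal{P}$. For an interior edge $e$ of a triangulation $\mathcal{T}$, the quadrilateral associated with $e$ is the union of the two triangles of $\mathcal{T}$ sharing $e$. A flip $f$ with underlying edge $\epsilon(f)=e$ is admissible in $\mathcal{T}$ if $e\in\mathcal{T}$ and its associated quadrilateral is convex; performing it replaces $e$ by the other diagonal $\phi(f)$ of that quadrilateral. Two distinct edges share a triangle in $\mathcal{T}$ if they are edges of the same triangle of $\mathcal{T}$. A sequence $F=\langle f_1,\ldots,f_r\rangle$ is valid with respect to $\mathcal{T}$ if there are triangulations $\mathcal{T}_0=\mathcal{T},\mathcal{T}_1,\ldots,\mathcal{T}_r$ such that $f_i$ is admissible in $\mathcal{T}_{i-1}$ and performing it yields $\mathcal{T}_i$; then we write $\mathcal{T}\xrightarrow{F}\mathcal{T}_r$. Flips in a sequence are distinct objects even if they have the same underlying edge. For $1\le i<j\le r$, flip $f_j$ is adjacent to $f_i$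 (written $f_i\to f_j$) if (1) either $\phi(f_i)=\epsilon(f_j)$ or $\phi(f_i)$ and $\epsilon(f_j)$ share a triangle in $\mathcal{T}_{j-1}$, and (2) there is no $p$ with $i<p<j$ and $\epsilon(f_p)=\phi(f_i)$. $\mathcal{D}_F$ is the directed acyclic graph whose nodes are the flips of $F$ and whose arcs are the pairs $f_i\to f_j$; a component of it is a weakly connected component. The flip distance between two triangulations is the minimum length of a valid sequence transforming one into the other. An instance $(\mathcal{T}_{initial},\mathcal{T}_{final},k)$ of Flip Distance consists of two triangulations of $\mathcal{P}$ and $k\in\mathbb{N}$; a solution is a valid sequence $F$ of length $k$ with $\mathcal{T}_{initial}\xrightarrow{F}\mathcal{T}_{final}$, where $k$ is the flip distance between them. For a solution $F=\langle f_1,\ldots,f_k\rangle$, $\mathcal{T}_j$ denotes the outcome of applying $\langle f_1,\ldots,f_j\rangle$ to $\mathcal{T}_{initial}$. A changed edge is an edge of $\mathcal{T}_{initial}$ not in $\mathcal{T}_{final}$; a component of $\mathcal{D}_F$ is essential if it contains a flip whose underlying edge is a changed edge. A solution $F$ is normalized if every component of $\mathcal{D}_F$ is essential and the flips of each component of $\mathcal{D}_F$ appear as a consecutive block in $F$. *)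

theory Defs
  imports "HOL-Analysis.Analysis"
begin

type_synonym pt = "real \<times> real"
type_synonym edge = "pt set"          (* a 2-element set of points *)
type_synonym triangle = "pt set"      (* a 3-element set of points *)
type_synonym triangulation = "pt set set"

definition is_triangulation :: "pt set \<Rightarrow> triangulation \<Rightarrow> bool" where
  "is_triangulation P T \<longleftrightarrow>
     finite P \<and>
     (\<forall>t\<in>T. t \<subseteq> P \<and> card t = 3 \<and> \<not> affine_dependent t) \<and>
     \<Union> ((\<lambda>t. convex hull t) ` T) = convex hull P \<and>
     (\<forall>t1\<in>T. \<forall>t2\<in>T. t1 \<noteq> t2 \<longrightarrow>
         convex hull t1 \<inter> convex hull t2 = convex hull (t1 \<inter> t2)) \<and>
     \<Union> T = P"

definition edges :: "triangulation \<Rightarrow> edge set" where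
  "edges T = {e. card e = 2 \<and> (\<exists>t\<in>T. e \<subseteq> t)}"

definition convex_quad :: "triangle \<Rightarrow> triangle \<Rightarrow> bool" where
  "convex_quad t1 t2 \<longleftrightarrow>
     card (t1 \<union> t2) = 4 \<and>
     (\<forall>p \<in> t1 \<union> t2. p \<notin> convex hull ((t1 \<union> t2) - {p})) \<and>
     convex (convex hull t1 \<union> convex hull t2)"

definition admissible :: "triangulation \<Rightarrow> edge \<Rightarrow> bool" where
  "admissible T e \<longleftrightarrow> e \<in> edges T \<and>
     (\<exists>t1\<in>T. \<exists>t2\<in>T. t1 \<noteq> t2 \<and> e \<subseteq> t1 \<and> e \<subseteq> t2 \<and> convex_quad t1 t2)"

text \<open>The other diagonal of the quadrilateral associated with e (phi of the flip).\<close>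
definition other_diag :: "triangulation \<Rightarrow> edge \<Rightarrow> edge" where
  "other_diag T e = \<Union> {t\<in>T. e \<subseteq> t} - e"

definition do_flip :: "triangulation \<Rightarrow> edge \<Rightarrow> triangulation" where
  "do_flip T e = {t\<in>T. \<not> e \<subseteq> t} \<union> (\<lambda>a. insert a (other_diag T e)) ` e"

text \<open>Flip sequences are lists of underlying edges: flip f_i (1-based) has underlying edge F!(i-1).
  Tr T F j is the triangulation T_j after performing the first j flips.\<close>
definition Tr :: "triangulation \<Rightarrow> edge list \<Rightarrow> nat \<Rightarrow> triangulation" where
  "Tr T F j = fold (\<lambda>e T'. do_flip T' e) (take j F) T"

definition eps :: "edge list \<Rightarrow> nat \<Rightarrow> edge" where
  "eps F i = F ! (i - 1)"

definition phi :: "triangulation \<Rightarrow> edge list \<Rightarrow> nat \<Rightarrow> edge" where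
  "phi T F i = other_diag (Tr T F (i - 1)) (eps F i)"

definition valid_seq :: "pt set \<Rightarrow> triangulation \<Rightarrow> edge list \<Rightarrow> bool" where
  "valid_seq P T F \<longleftrightarrow>
     (\<forall>j \<le> length F. is_triangulation P (Tr T F j)) \<and>
     (\<forall>i \<in> {1..length F}. admissible (Tr T F (i - 1)) (eps F i))"

definition is_flip_distance :: "pt set \<Rightarrow> triangulation \<Rightarrow> triangulation \<Rightarrow> nat \<Rightarrow> bool" where
  "is_flip_distance P T1 T2 k \<longleftrightarrow>
     (\<exists>F. valid_seq P T1 F \<and> length F = k \<and> Tr T1 F k = T2) \<and>
     (\<forall>F. valid_seq P T1 F \<and> Tr T1 F (length F) = T2 \<longrightarrow> k \<le> length F)"

definition is_solution :: "pt set \<Rightarrow> triangulation \<Rightarrow> triangulation \<Rightarrow> nat \<Rightarrow> edge list \<Rightarrow> bool" where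
  "is_solution P Ti Tf k F \<longleftrightarrow>
     is_triangulation P Ti \<and> is_triangulation P Tf \<and>
     valid_seq P Ti F \<and> length F = k \<and> Tr Ti F k = Tf \<and> is_flip_distance P Ti Tf k"

definition share_triangle :: "triangulation \<Rightarrow> edge \<Rightarrow> edge \<Rightarrow> bool" where
  "share_triangle T e1 e2 \<longleftrightarrow> e1 \<noteq> e2 \<and> card e1 = 2 \<and> card e2 = 2 \<and>
     (\<exists>t\<in>T. e1 \<subseteq> t \<and> e2 \<subseteq> t)"

text \<open>Arc f_i -> f_j of the DAG D_F (1-based indices).\<close>
definition adjacent :: "triangulation \<Rightarrow> edge list \<Rightarrow> nat \<Rightarrow> nat \<Rightarrow> bool" where
  "adjacent T F i j \<longleftrightarrow> 1 \<le> i \<and> i < j \<and> j \<le> length F \<and>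
     (phi T F i = eps F j \<or> share_triangle (Tr T F (j - 1)) (phi T F i) (eps F j)) \<and>
     \<not> (\<exists>p. i < p \<and> p < j \<and> eps F p = phi T F i)"

definition arcs :: "triangulation \<Rightarrow> edge list \<Rightarrow> (nat \<times> nat) set" where
  "arcs T F = {(i, j). adjacent T F i j}"

definition components :: "triangulation \<Rightarrow> edge list \<Rightarrow> nat set set" where
  "components T F = {C. \<exists>i \<in> {1..length F}.
      C = {j \<in> {1..length F}. (i, j) \<in> (arcs T F \<union> (arcs T F)\<inverse>)\<^sup>*}}"

definition changed_edge :: "triangulation \<Rightarrow> triangulation \<Rightarrow> edge \<Rightarrow> bool" where
  "changed_edge Ti Tf e \<longleftrightarrow> e \<in> edges Ti \<and> e \<notin> edges Tf"

definition essential :: "triangulation \<Rightarrow> triangulation \<Rightarrow> edge list \<Rightarrow> nat set \<Rightarrow> bool" where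
  "essential Ti Tf F C \<longleftrightarrow> (\<exists>i\<in>C. changed_edge Ti Tf (eps F i))"

definition normalized :: "triangulation \<Rightarrow> triangulation \<Rightarrow> edge list \<Rightarrow> bool" where
  "normalized Ti Tf F \<longleftrightarrow>
     (\<forall>C \<in> components Ti F. essential Ti Tf F C \<and> (\<exists>a b. C = {a..b}))"

end

theory Submission
  imports Defs
begin

definition cross :: "edge \<Rightarrow> edge \<Rightarrow> bool" where
  "cross e x \<longleftrightarrow> e \<inter> x = {} \<and> convex hull e \<inter> convex hull x \<noteq> {}"

lemma cross_sym: "cross e x \<Longrightarrow> cross x e"
  unfolding cross_def by blast

lemma face_lemma:
  fixes s :: "pt set"
  assumes "\<not> affine_dependent s" "A \<subseteq> s" "B \<subseteq> s"
  shows "convex hull A \<inter> convex hull B \<subseteq> convex hull (A \<inter> B)"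
proof -
  have "\<not> affine_dependent (A \<union> B)"
    using assms affine_dependent_subset by (metis Un_least)
  then show ?thesis using convex_hull_Int by blast
qed

lemma tri_meet:
  assumes "is_triangulation P T" "t1 \<in> T" "t2 \<in> T" "t1 \<noteq> t2"
  shows "convex hull t1 \<inter> convex hull t2 = convex hull (t1 \<inter> t2)"
proof -
  have "\<forall>t1\<in>T. \<forall>t2\<in>T. t1 \<noteq> t2 \<longrightarrow>
         convex hull t1 \<inter> convex hull t2 = convex hull (t1 \<inter> t2)"
    using assms(1) unfolding is_triangulation_def by (elim conjE)
  then show ?thesis using assms(2-4) by blast
qed

lemma tri_tri:
  assumes "is_triangulation P T" "t \<in> T"
  shows "t \<subseteq> P" "card t = 3" "\<not> affine_dependent t"
proof -
  have "\<forall>t\<in>T. t \<subseteq> P \<and> card t = 3 \<and> \<not> affine_dependent t"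
    using assms(1) unfolding is_triangulation_def by (elim conjE)
  then show "t \<subseteq> P" "card t = 3" "\<not> affine_dependent t" using assms(2) by auto
qed

lemma tri_cover:
  assumes "is_triangulation P T" "p \<in> P"
  shows "\<exists>t\<in>T. p \<in> t"
proof -
  have "\<Union> T = P"
    using assms(1) unfolding is_triangulation_def by (elim conjE)
  then show ?thesis using assms(2) by blast
qed
lemma vertex_lemma:
  assumes T: "is_triangulation P T" and t: "t \<in> T" and p: "p \<in> P" and ph: "p \<in> convex hull t"
  shows "p \<in> t"
proof -
  from tri_cover[OF T p] obtain t' where t': "t' \<in> T" "p \<in> t'" by blast
  show ?thesis
  proof (cases "t' = t")
    case True then show ?thesis using t' by simp
  next
    case False
    have "convex hull t \<inter> convex hull t' = convex hull (t \<inter> t')"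
      using tri_meet[OF T t t'(1)] False by simp
    then have p1: "p \<in> convex hull (t \<inter> t')" using ph t'(2) hull_inc[of p t'] by blast
    have ind: "\<not> affine_dependent t'" using tri_tri[OF T t'(1)] by blast
    have "convex hull {p} \<inter> convex hull (t \<inter> t') \<subseteq> convex hull ({p} \<inter> (t \<inter> t'))"
      by (rule face_lemma[OF ind]) (use t' in auto)
    then have "p \<in> convex hull ({p} \<inter> (t \<inter> t'))" using p1 hull_inc[of p "{p}"] by blast
    then show ?thesis by (cases "p \<in> t") auto
  qed
qed

lemma edge_nopts:
  assumes T: "is_triangulation P T" and e: "e \<in> edges T" and p: "p \<in> P" and ph: "p \<in> convex hull e"
  shows "p \<in> e"
proof -
  from e obtain t where t: "t \<in> T" "e \<subseteq> t" unfolding edges_def by blast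
  have "p \<in> convex hull t" using ph hull_mono[OF t(2)] by blast
  then have pt: "p \<in> t" using vertex_lemma T t p by blast
  have ind: "\<not> affine_dependent t" using tri_tri[OF T t(1)] by blast
  have "convex hull {p} \<inter> convex hull e \<subseteq> convex hull ({p} \<inter> e)"
    by (rule face_lemma[OF ind]) (use t pt in auto)
  then have "p \<in> convex hull ({p} \<inter> e)" using ph hull_inc[of p "{p}"] by blast
  then show ?thesis by (cases "p \<in> e") auto
qed

lemma nocross:
  assumes T: "is_triangulation P T" and x: "x \<in> edges T" and y: "y \<in> edges T"
  shows "\<not> cross x y"
proof
  assume c: "cross x y"
  from x obtain t1 where t1: "t1 \<in> T" "x \<subseteq> t1" "card x = 2" unfolding edges_def by blast
  from y obtain t2 where t2: "t2 \<in> T" "y \<subseteq> t2" "card y = 2" unfolding edges_def by blast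
  have i1: "\<not> affine_dependent t1" "card t1 = 3" using tri_tri[OF T t1(1)] by blast+
  have i2: "\<not> affine_dependent t2" using tri_tri[OF T t2(1)] by blast
  from c obtain z where z: "z \<in> convex hull x" "z \<in> convex hull y" and dj: "x \<inter> y = {}"
    unfolding cross_def by blast
  show False
  proof (cases "t1 = t2")
    case True
    have "finite t1" using i1 by (simp add: card_ge_0_finite)
    then have "card (x \<union> y) \<le> 3" using t1 t2 True i1 by (metis card_mono le_sup_iff)
    moreover have "card (x \<union> y) = 4"
    proof -
      have "finite x" "finite y" using t1(3) t2(3) by (auto intro: card_ge_0_finite)
      then show ?thesis using dj t1(3) t2(3) by (subst card_Un_disjoint) auto
    qed
    ultimately show False by simp
  next
    case False
    have "convex hull t1 \<inter> convex hull t2 = convex hull (t1 \<inter> t2)"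
      using tri_meet[OF T t1(1) t2(1)] False by simp
    then have z1: "z \<in> convex hull (t1 \<inter> t2)"
      using z hull_mono[OF t1(2)] hull_mono[OF t2(2)] by blast
    have "convex hull x \<inter> convex hull (t1 \<inter> t2) \<subseteq> convex hull (x \<inter> (t1 \<inter> t2))"
      by (rule face_lemma[OF i1(1)]) (use t1 in auto)
    then have z2: "z \<in> convex hull (x \<inter> (t1 \<inter> t2))" using z z1 by blast
    have "convex hull y \<inter> convex hull (x \<inter> (t1 \<inter> t2)) \<subseteq> convex hull (y \<inter> (x \<inter> (t1 \<inter> t2)))"
      by (rule face_lemma[OF i2]) (use t2 in auto)
    then have "z \<in> convex hull (y \<inter> (x \<inter> (t1 \<inter> t2)))" using z z2 by blast
    moreover have "y \<inter> (x \<inter> (t1 \<inter> t2)) = {}" using dj by blast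
    ultimately show False by simp
  qed
qed

lemma Tr_Suc:
  assumes "j < length F"
  shows "Tr T F (Suc j) = do_flip (Tr T F j) (eps F (Suc j))"
proof -
  have "take (Suc j) F = take j F @ [F ! j]" using assms by (rule take_Suc_conv_app_nth)
  then show ?thesis unfolding Tr_def eps_def by simp
qed

lemma card2_finite: "card (x::'a set) = 2 \<Longrightarrow> finite x"
  using card_ge_0_finite[of x] by simp

lemma edgesD: "x \<in> edges T \<Longrightarrow> card x = 2 \<and> (\<exists>t\<in>T. x \<subseteq> t)"
  unfolding edges_def by (rule CollectD)

lemma edgesI: "card x = 2 \<Longrightarrow> t \<in> T \<Longrightarrow> x \<subseteq> t \<Longrightarrow> x \<in> edges T"
  unfolding edges_def by (intro CollectI conjI bexI)

lemma in_hull2: "0 \<le> s \<Longrightarrow> 0 \<le> t \<Longrightarrow> s + t = 1 \<Longrightarrow> s *\<^sub>R x + t *\<^sub>R y \<in> convex hull {x,y}"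
  unfolding convex_hull_2 mem_Collect_eq by (rule exI[of _ s], rule exI[of _ t]) simp

lemma in_hull3: "0 \<le> r \<Longrightarrow> 0 \<le> s \<Longrightarrow> 0 \<le> t \<Longrightarrow> r + s + t = 1 \<Longrightarrow>
   r *\<^sub>R x + s *\<^sub>R y + t *\<^sub>R z \<in> convex hull {x,y,z}"
  unfolding convex_hull_3 mem_Collect_eq by (rule exI[of _ r], rule exI[of _ s], rule exI[of _ t]) simp

lemma seg_iff: "(x::pt) \<in> convex hull {u,v} \<longleftrightarrow> (\<exists>s. 0 \<le> s \<and> s \<le> 1 \<and> x = u + s *\<^sub>R (v - u))"
proof
  assume "x \<in> convex hull {u,v}"
  then have "\<exists>a b. x = a *\<^sub>R u + b *\<^sub>R v \<and> 0 \<le> a \<and> 0 \<le> b \<and> a + b = 1"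
    unfolding convex_hull_2 by simp
  then obtain a b where ab: "x = a *\<^sub>R u + b *\<^sub>R v" "0 \<le> a" "0 \<le> b" "a + b = 1"
    by blast
  have "a = 1 - b" using ab(4) by simp
  then have "x = (1 - b) *\<^sub>R u + b *\<^sub>R v" using ab(1) by simp
  then have "x = u + b *\<^sub>R (v - u)" by (simp add: algebra_simps)
  then show "\<exists>s. 0 \<le> s \<and> s \<le> 1 \<and> x = u + s *\<^sub>R (v - u)" using ab by auto
next
  assume "\<exists>s. 0 \<le> s \<and> s \<le> 1 \<and> x = u + s *\<^sub>R (v - u)"
  then obtain s where s: "0 \<le> s" "s \<le> 1" "x = u + s *\<^sub>R (v - u)" by blast
  then have "x = (1 - s) *\<^sub>R u + s *\<^sub>R v" by (simp add: algebra_simps)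
  then show "x \<in> convex hull {u,v}" using in_hull2[of "1-s" s u v] s by simp
qed

lemma diag_half:
  fixes a b c c' :: pt
  assumes m: "(1/2) *\<^sub>R (c + c') \<in> convex hull {a,b,c}" and nc: "c' \<notin> convex hull {a,b,c}"
  shows "convex hull {a,b} \<inter> convex hull {c,c'} \<noteq> {}"
proof -
  obtain \<alpha> \<beta> \<gamma> where co: "0 \<le> \<alpha>" "0 \<le> \<beta>" "0 \<le> \<gamma>" "\<alpha> + \<beta> + \<gamma> = 1"
    and meq: "(1/2) *\<^sub>R (c + c') = \<alpha> *\<^sub>R a + \<beta> *\<^sub>R b + \<gamma> *\<^sub>R c"
    using m unfolding convex_hull_3 by blast
  have c'eq: "c' = (2*\<alpha>) *\<^sub>R a + (2*\<beta>) *\<^sub>R b + (2*\<gamma> - 1) *\<^sub>R c"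
  proof -
    have "c + c' = 2 *\<^sub>R ((1/2) *\<^sub>R (c + c'))" by simp
    also have "\<dots> = 2 *\<^sub>R (\<alpha> *\<^sub>R a + \<beta> *\<^sub>R b + \<gamma> *\<^sub>R c)" using meq by simp
    finally show ?thesis by (simp add: algebra_simps)
  qed
  have g: "\<gamma> < 1/2"
  proof (rule ccontr)
    assume "\<not> \<gamma> < 1/2"
    then have "c' \<in> convex hull {a,b,c}" unfolding c'eq using co
      by (intro in_hull3) auto
    then show False using nc by simp
  qed
  define q where "q = (\<alpha>/(1-\<gamma>)) *\<^sub>R a + (\<beta>/(1-\<gamma>)) *\<^sub>R b"
  have s1: "\<alpha> + \<beta> = 1 - \<gamma>" "1 - \<gamma> > 0" using co g by auto
  have q1: "q \<in> convex hull {a,b}" unfolding q_def using co s1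
    by (intro in_hull2) (simp_all add: add_divide_distrib[symmetric])
  have e1: "(2*(1-\<gamma>)) *\<^sub>R q = (2*\<alpha>) *\<^sub>R a + (2*\<beta>) *\<^sub>R b"
  proof -
    have k: "(2 - 2*\<gamma>) * x / (1-\<gamma>) = 2 * x" for x using s1 by (simp add: field_simps)
    show ?thesis unfolding q_def using s1 by (simp add: scaleR_add_right k)
  qed
  define r where "r = (1/(2-2*\<gamma>)) *\<^sub>R c' + ((1-2*\<gamma>)/(2-2*\<gamma>)) *\<^sub>R c"
  have e2: "(2*(1-\<gamma>)) *\<^sub>R r = c' + (1-2*\<gamma>) *\<^sub>R c"
    unfolding r_def using s1 by (simp add: scaleR_add_right)
  have e3: "c' + (1-2*\<gamma>) *\<^sub>R c = (2*\<alpha>) *\<^sub>R a + (2*\<beta>) *\<^sub>R b"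
    unfolding c'eq by (simp add: algebra_simps)
  have "(2*(1-\<gamma>)) *\<^sub>R q = (2*(1-\<gamma>)) *\<^sub>R r"
    using e1 e2 e3 by (rule trans[OF _ sym[OF trans]])
  then have qr: "q = r" using s1 by simp
  have sum2: "1/(2-2*\<gamma>) + (1-2*\<gamma>)/(2-2*\<gamma>) = 1"
    using s1 by (simp add: add_divide_distrib[symmetric])
  have "r \<in> convex hull {c',c}"
    unfolding r_def using g s1 sum2 by (intro in_hull2) simp_all
  then have q2: "q \<in> convex hull {c',c}" using qr by simp
  have cc: "{c',c} = {c,c'}" by (rule insert_commute)
  have "q \<in> convex hull {c,c'}" using q2 unfolding cc .
  then show ?thesis using q1 by blast
qed

lemma diag_cross:
  fixes a b c c' :: pt
  assumes Q: "convex_quad {a,b,c} {a,b,c'}" and dist: "c \<noteq> c'" "c \<notin> {a,b}" "c' \<notin> {a,b}"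
  shows "convex hull {a,b} \<inter> convex hull {c,c'} \<noteq> {}"
proof -
  have cq: "\<forall>p \<in> {a,b,c} \<union> {a,b,c'}. p \<notin> convex hull (({a,b,c} \<union> {a,b,c'}) - {p})"
    "convex (convex hull {a,b,c} \<union> convex hull {a,b,c'})"
    using Q unfolding convex_quad_def by blast+
  have "c' \<in> {a,b,c} \<union> {a,b,c'}" "c \<in> {a,b,c} \<union> {a,b,c'}" by simp_all
  then have h: "c' \<notin> convex hull (({a,b,c} \<union> {a,b,c'}) - {c'})"
      "c \<notin> convex hull (({a,b,c} \<union> {a,b,c'}) - {c})" using cq(1) by blast+
  have "({a,b,c} \<union> {a,b,c'}) - {c'} = {a,b,c}" using dist by blast
  then have n1: "c' \<notin> convex hull {a,b,c}" using h(1) by simp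
  have "({a,b,c} \<union> {a,b,c'}) - {c} = {a,b,c'}" using dist by blast
  then have n2: "c \<notin> convex hull {a,b,c'}" using h(2) by simp
  have hc: "c \<in> convex hull {a,b,c}" "c' \<in> convex hull {a,b,c'}" by (simp_all add: hull_inc)
  have "(1/2) *\<^sub>R c + (1/2) *\<^sub>R c' \<in> convex hull {a,b,c} \<union> convex hull {a,b,c'}"
    by (rule convexD[OF cq(2)]) (use hc in auto)
  then have "(1/2) *\<^sub>R (c + c') \<in> convex hull {a,b,c} \<union> convex hull {a,b,c'}"
    by (simp add: scaleR_add_right)
  then show ?thesis
  proof
    assume "(1/2) *\<^sub>R (c + c') \<in> convex hull {a,b,c}"
    then show ?thesis using diag_half n1 by blast
  next
    assume "(1/2) *\<^sub>R (c + c') \<in> convex hull {a,b,c'}"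
    then have "(1/2) *\<^sub>R (c' + c) \<in> convex hull {a,b,c'}" by (simp add: add.commute)
    then have "convex hull {a,b} \<inter> convex hull {c',c} \<noteq> {}" using diag_half n2 by blast
    then show ?thesis by (simp add: insert_commute)
  qed
qed

lemma ext_seg:
  fixes x y v w :: pt
  assumes w: "w = x + \<beta> *\<^sub>R (v - x)" and wxy: "w \<in> convex hull {x,y}"
    and wx: "w \<noteq> x" and wy: "w \<noteq> y" and b: "0 < \<beta>" "\<beta> < 1"
  shows "\<exists>s. \<beta> < s \<and> s \<le> 1 \<and> x + s *\<^sub>R (v - x) \<in> convex hull {x,y}"
proof -
  obtain \<mu> where mu: "0 \<le> \<mu>" "\<mu> \<le> 1" "w = x + \<mu> *\<^sub>R (y - x)" using wxy seg_iff by blast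
  have "\<mu> \<noteq> 0" using mu wx by auto
  moreover have "\<mu> \<noteq> 1" using mu wy by auto
  ultimately have m: "0 < \<mu>" "\<mu> < 1" using mu by auto
  have eq: "\<beta> *\<^sub>R (v - x) = \<mu> *\<^sub>R (y - x)" using w mu(3) by simp
  define s where "s = min 1 (\<beta>/\<mu>)"
  have "\<beta> < \<beta>/\<mu>" using m b by (simp add: field_simps)
  then have s1: "\<beta> < s" "s \<le> 1" using b unfolding s_def by auto
  have s2: "s \<le> \<beta>/\<mu>" unfolding s_def by simp
  define k where "k = s * \<mu> / \<beta>"
  have k: "0 \<le> k" "k \<le> 1" unfolding k_def using s1 s2 m b by (auto simp: field_simps)
  have "s *\<^sub>R (v - x) = (s/\<beta>) *\<^sub>R (\<beta> *\<^sub>R (v - x))" using b by simp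
  also have "\<dots> = (s/\<beta>) *\<^sub>R (\<mu> *\<^sub>R (y - x))" using eq by simp
  also have "\<dots> = k *\<^sub>R (y - x)" unfolding k_def by simp
  finally have "x + s *\<^sub>R (v - x) = x + k *\<^sub>R (y - x)" by simp
  then have "x + s *\<^sub>R (v - x) \<in> convex hull {x,y}" using seg_iff k by blast
  then show ?thesis using s1 by blast
qed

lemma side_exit:
  fixes x y u v :: pt and Qs :: "pt set"
  assumes wxy: "u + \<beta> *\<^sub>R (v - u) \<in> convex hull {x,y}" and sub: "convex hull {x,y} \<subseteq> Qs"
    and xP: "x \<in> P" "y \<in> P" and wP: "u + \<beta> *\<^sub>R (v - u) \<notin> P" and vQ: "v \<notin> Qs"
    and b: "0 < \<beta>" "\<beta> < 1"
    and maxi: "\<forall>s. \<beta> < s \<and> s \<le> 1 \<longrightarrow> u + s *\<^sub>R (v - u) \<notin> Qs"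
  shows "cross {x,y} {u,v}"
proof -
  define w where "w = u + \<beta> *\<^sub>R (v - u)"
  have wx: "w \<noteq> x" "w \<noteq> y" using wP xP unfolding w_def by auto
  have "x \<in> Qs" "y \<in> Qs" using sub hull_inc[of x "{x,y}"] hull_inc[of y "{x,y}"] by auto
  then have vx: "v \<noteq> x" "v \<noteq> y" using vQ by auto
  have ux: "u \<noteq> x"
  proof
    assume "u = x"
    then obtain s where "\<beta> < s" "s \<le> 1" "u + s *\<^sub>R (v - u) \<in> convex hull {x,y}"
      using ext_seg[of w x \<beta> v y] wxy wx b unfolding w_def by auto
    then show False using maxi sub by blast
  qed
  have uy: "u \<noteq> y"
  proof
    assume "u = y"
    have "w \<in> convex hull {y,x}" using wxy unfolding w_def by (simp add: insert_commute)
    then obtain s where "\<beta> < s" "s \<le> 1" "u + s *\<^sub>R (v - u) \<in> convex hull {y,x}"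
      using ext_seg[of w y \<beta> v x] wx b \<open>u = y\<close> unfolding w_def by auto
    moreover have "convex hull {y,x} = convex hull {x,y}" by (simp add: insert_commute)
    ultimately show False using maxi sub by blast
  qed
  have "\<exists>s. 0 \<le> s \<and> s \<le> 1 \<and> w = u + s *\<^sub>R (v - u)"
    using b unfolding w_def by (intro exI[of _ \<beta>]) auto
  then have "w \<in> convex hull {u,v}" using seg_iff by blast
  then have "convex hull {x,y} \<inter> convex hull {u,v} \<noteq> {}" using wxy unfolding w_def by blast
  moreover have "{x,y} \<inter> {u,v} = {}" using ux uy vx by auto
  ultimately show ?thesis unfolding cross_def by blast
qed

lemma tri_exit:
  fixes x1 x2 x3 u v :: pt and Qs :: "pt set"
  assumes ind: "\<not> affine_dependent {x1,x2,x3}" and d: "x1 \<noteq> x2" "x1 \<noteq> x3" "x2 \<noteq> x3"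
    and sub: "convex hull {x1,x2,x3} \<subseteq> Qs" and xP: "x1 \<in> P" "x2 \<in> P" "x3 \<in> P"
    and w: "u + \<beta> *\<^sub>R (v - u) \<in> convex hull {x1,x2,x3}"
    and wP: "u + \<beta> *\<^sub>R (v - u) \<notin> P" and vQ: "v \<notin> Qs"
    and b: "0 < \<beta>" "\<beta> < 1"
    and maxi: "\<forall>s. \<beta> < s \<and> s \<le> 1 \<longrightarrow> u + s *\<^sub>R (v - u) \<notin> Qs"
    and uv: "u \<noteq> v"
  shows "cross {x1,x2} {u,v} \<or> cross {x1,x3} {u,v} \<or> cross {x2,x3} {u,v}"
proof -
  define w where "w = u + \<beta> *\<^sub>R (v - u)"
  have "\<exists>l1 l2 l3. w = l1 *\<^sub>R x1 + l2 *\<^sub>R x2 + l3 *\<^sub>R x3 \<and> 0 \<le> l1 \<and> 0 \<le> l2 \<and> 0 \<le> l3 \<and> l1 + l2 + l3 = 1"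
    using w unfolding w_def convex_hull_3 by simp
  then obtain l1 l2 l3 where l: "w = l1 *\<^sub>R x1 + l2 *\<^sub>R x2 + l3 *\<^sub>R x3" "0 \<le> l1" "0 \<le> l2" "0 \<le> l3"
    "l1 + l2 + l3 = 1" by blast
  have h12: "convex hull {x1,x2} \<subseteq> Qs" using sub hull_mono[of "{x1,x2}" "{x1,x2,x3}"] by auto
  have h13: "convex hull {x1,x3} \<subseteq> Qs" using sub hull_mono[of "{x1,x3}" "{x1,x2,x3}"] by auto
  have h23: "convex hull {x2,x3} \<subseteq> Qs" using sub hull_mono[of "{x2,x3}" "{x1,x2,x3}"] by auto
  consider "l3 = 0" | "l2 = 0" | "l1 = 0" | "0 < l1 \<and> 0 < l2 \<and> 0 < l3" using l by linarith
  then show ?thesis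
  proof cases
    case 1
    then have "w = l1 *\<^sub>R x1 + l2 *\<^sub>R x2" "l1 + l2 = 1" using l by auto
    then have "w \<in> convex hull {x1,x2}" using in_hull2 l by metis
    then have "cross {x1,x2} {u,v}"
      using side_exit[OF _ h12 xP(1,2) wP vQ b maxi] unfolding w_def by blast
    then show ?thesis by blast
  next
    case 2
    then have "w = l1 *\<^sub>R x1 + l3 *\<^sub>R x3" "l1 + l3 = 1" using l by auto
    then have "w \<in> convex hull {x1,x3}" using in_hull2 l by metis
    then have "cross {x1,x3} {u,v}"
      using side_exit[OF _ h13 xP(1,3) wP vQ b maxi] unfolding w_def by blast
    then show ?thesis by blast
  next
    case 3
    then have "w = l2 *\<^sub>R x2 + l3 *\<^sub>R x3" "l2 + l3 = 1" using l by auto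
    then have "w \<in> convex hull {x2,x3}" using in_hull2 l by metis
    then have "cross {x2,x3} {u,v}"
      using side_exit[OF _ h23 xP(2,3) wP vQ b maxi] unfolding w_def by blast
    then show ?thesis by blast
  next
    case 4
    define U where "U = (\<lambda>x. if x = x1 then l1 else if x = x2 then l2 else l3)"
    have "\<forall>x\<in>{x1,x2,x3}. 0 < U x" using 4 unfolding U_def by auto
    moreover have "sum U {x1,x2,x3} = 1" using d l(5) unfolding U_def by simp
    moreover have "(\<Sum>x\<in>{x1,x2,x3}. U x *\<^sub>R x) = w" using d l(1) unfolding U_def by simp
    ultimately have wi: "w \<in> interior (convex hull {x1,x2,x3})"
      using d unfolding interior_convex_hull_explicit_minimal[OF ind] by auto
    then obtain e where e: "e > 0" "ball w e \<subseteq> convex hull {x1,x2,x3}"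
      using mem_interior by blast
    define n where "n = norm (v - u)"
    have n: "n > 0" using uv unfolding n_def by simp
    define dd where "dd = min (1 - \<beta>) (e / (2 * n))"
    have dd: "0 < dd" "dd \<le> 1 - \<beta>" "dd \<le> e / (2 * n)" using b e n unfolding dd_def by auto
    define s where "s = \<beta> + dd"
    have s: "\<beta> < s" "s \<le> 1" using dd unfolding s_def by auto
    have "u + s *\<^sub>R (v - u) = w + dd *\<^sub>R (v - u)" unfolding s_def w_def by (simp add: algebra_simps)
    then have "dist w (u + s *\<^sub>R (v - u)) = dd * n" unfolding n_def using dd by (simp add: dist_norm)
    also have "\<dots> \<le> e / 2" using dd n by (simp add: field_simps)
    also have "\<dots> < e" using e by simp
    finally have "u + s *\<^sub>R (v - u) \<in> ball w e" by simp
    then have "u + s *\<^sub>R (v - u) \<in> Qs" using e sub by blast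
    then show ?thesis using maxi s by blast
  qed
qed

lemma exit_lemma:
  fixes u v z a b c c' :: pt
  assumes T: "is_triangulation P T" and t1: "{a,b,c} \<in> T" and t2: "{a,b,c'} \<in> T"
    and Q: "convex_quad {a,b,c} {a,b,c'}"
    and dist: "a \<noteq> b" "c \<notin> {a,b}" "c' \<notin> {a,b}" "c \<noteq> c'"
    and uP: "u \<in> P" and vP: "v \<in> P" and uv: "u \<noteq> v"
    and nopts: "\<forall>p\<in>P. p \<in> convex hull {u,v} \<longrightarrow> p = u \<or> p = v"
    and cuv: "c \<noteq> u" "c \<noteq> v" "c' \<noteq> u" "c' \<noteq> v"
    and z: "z \<in> convex hull {u,v}" "z \<in> convex hull {c,c'}"
    and vQ: "v \<notin> convex hull {a,b,c} \<union> convex hull {a,b,c'}"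
  shows "\<exists>y\<in>{{a,b},{a,c},{b,c},{a,c'},{b,c'}}. cross y {u,v}"
proof -
  define Qs where "Qs = convex hull {a,b,c} \<union> convex hull {a,b,c'}"
  define p where "p = (\<lambda>s. u + s *\<^sub>R (v - u))"
  have cq: "\<forall>p \<in> {a,b,c} \<union> {a,b,c'}. p \<notin> convex hull (({a,b,c} \<union> {a,b,c'}) - {p})"
    "convex (convex hull {a,b,c} \<union> convex hull {a,b,c'})"
    using Q unfolding convex_quad_def by blast+
  have convQ: "convex Qs" using cq(2) unfolding Qs_def .
  have PQ: "x \<in> {a,b,c,c'}" if "x \<in> P" "x \<in> Qs" for x
  proof -
    have "x \<in> convex hull {a,b,c} \<or> x \<in> convex hull {a,b,c'}" using that unfolding Qs_def by blast
    then have "x \<in> {a,b,c} \<or> x \<in> {a,b,c'}" using vertex_lemma[OF T t1 that(1)] vertex_lemma[OF T t2 that(1)] by blast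
    then show ?thesis by blast
  qed
  have "{c,c'} \<subseteq> Qs" unfolding Qs_def using hull_inc[of c "{a,b,c}"] hull_inc[of c' "{a,b,c'}"] by blast
  then have hcc: "convex hull {c,c'} \<subseteq> Qs" using convQ by (simp add: hull_minimal)
  then have zQ: "z \<in> Qs" using z by blast
  obtain t0 where t0: "0 \<le> t0" "t0 \<le> 1" "z = p t0" using z(1) seg_iff unfolding p_def by blast
  define J where "J = {0..1} \<inter> p -` Qs"
  have "compact Qs" unfolding Qs_def by (intro compact_Un compact_convex_hull) auto
  then have "closed Qs" by (rule compact_imp_closed)
  moreover have "continuous_on UNIV p" unfolding p_def by (intro continuous_intros)
  ultimately have "closed (p -` Qs)" by (rule closed_vimage)
  then have cJ: "compact J" unfolding J_def by (intro compact_Int_closed) auto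
  have t0J: "t0 \<in> J" unfolding J_def using t0 zQ by auto
  then obtain \<beta> where bJ: "\<beta> \<in> J" and bmax: "\<forall>s\<in>J. s \<le> \<beta>" using compact_attains_sup[OF cJ] by blast
  have b01: "0 \<le> \<beta>" "\<beta> \<le> 1" "p \<beta> \<in> Qs" using bJ unfolding J_def by auto
  have "p 1 = v" unfolding p_def by simp
  then have "\<beta> \<noteq> 1" using b01 vQ unfolding Qs_def by auto
  then have b1: "\<beta> < 1" using b01 by simp
  have maxi: "\<forall>s. \<beta> < s \<and> s \<le> 1 \<longrightarrow> u + s *\<^sub>R (v - u) \<notin> Qs"
  proof (intro allI impI)
    fix s assume s: "\<beta> < s \<and> s \<le> 1"
    show "u + s *\<^sub>R (v - u) \<notin> Qs"
    proof
      assume "u + s *\<^sub>R (v - u) \<in> Qs"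
      then have "s \<in> J" unfolding J_def p_def using s b01 by auto
      then show False using bmax s by force
    qed
  qed
  have b0: "0 < \<beta>"
  proof (rule ccontr)
    assume "\<not> 0 < \<beta>"
    then have "t0 = 0" using t0 bmax t0J b01 by force
    then have zu: "z = u" using t0 unfolding p_def by simp
    then have "u \<in> {a,b,c,c'}" using PQ uP zQ by blast
    then have ua: "u = a \<or> u = b" using cuv by blast
    then have "u \<in> {a,b,c} \<union> {a,b,c'}" by blast
    then have nu: "u \<notin> convex hull (({a,b,c} \<union> {a,b,c'}) - {u})" using cq(1) by blast
    have "{c,c'} \<subseteq> ({a,b,c} \<union> {a,b,c'}) - {u}" using cuv by blast
    then have "convex hull {c,c'} \<subseteq> convex hull (({a,b,c} \<union> {a,b,c'}) - {u})" by (rule hull_mono)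
    then show False using nu z(2) zu by blast
  qed
  define w where "w = u + \<beta> *\<^sub>R (v - u)"
  have "\<exists>s. 0 \<le> s \<and> s \<le> 1 \<and> w = u + s *\<^sub>R (v - u)"
    using b01 unfolding w_def by (intro exI[of _ \<beta>]) auto
  then have wuv: "w \<in> convex hull {u,v}" using seg_iff by blast
  have wu: "w \<noteq> u" using b0 uv unfolding w_def by simp
  have wv: "w \<noteq> v"
  proof
    assume "w = v"
    then have "(1 - \<beta>) *\<^sub>R (v - u) = 0" unfolding w_def by (auto simp: algebra_simps)
    then show False using b1 uv by simp
  qed
  have wP: "w \<notin> P" using nopts wuv wu wv by blast
  have wQ: "w \<in> Qs" using b01 unfolding w_def p_def by simp
  have dd: "a \<noteq> c" "b \<noteq> c" "a \<noteq> c'" "b \<noteq> c'" using dist by auto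
  have abcP: "a \<in> P" "b \<in> P" "c \<in> P" "c' \<in> P" using tri_tri(1)[OF T t1] tri_tri(1)[OF T t2] by auto
  have ind: "\<not> affine_dependent {a,b,c}" "\<not> affine_dependent {a,b,c'}"
    using tri_tri(3)[OF T t1] tri_tri(3)[OF T t2] by auto
  have s1: "convex hull {a,b,c} \<subseteq> Qs" "convex hull {a,b,c'} \<subseteq> Qs" unfolding Qs_def by auto
  have vQs: "v \<notin> Qs" using vQ unfolding Qs_def .
  have "w \<in> convex hull {a,b,c} \<or> w \<in> convex hull {a,b,c'}" using wQ unfolding Qs_def by blast
  then show ?thesis
  proof
    assume "w \<in> convex hull {a,b,c}"
    then have "cross {a,b} {u,v} \<or> cross {a,c} {u,v} \<or> cross {b,c} {u,v}"
      using tri_exit[OF ind(1) dist(1) dd(1,2) s1(1) abcP(1,2,3) _ _ vQs b0 b1 maxi uv] wP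
      unfolding w_def by blast
    then show ?thesis by blast
  next
    assume "w \<in> convex hull {a,b,c'}"
    then have "cross {a,b} {u,v} \<or> cross {a,c'} {u,v} \<or> cross {b,c'} {u,v}"
      using tri_exit[OF ind(2) dist(1) dd(3,4) s1(2) abcP(1,2,4) _ _ vQs b0 b1 maxi uv] wP
      unfolding w_def by blast
    then show ?thesis by blast
  qed
qed

lemma geo_lemma:
  fixes u v z a b c c' :: pt
  assumes T: "is_triangulation P T" and t1: "{a,b,c} \<in> T" and t2: "{a,b,c'} \<in> T"
    and Q: "convex_quad {a,b,c} {a,b,c'}"
    and dist: "a \<noteq> b" "c \<notin> {a,b}" "c' \<notin> {a,b}" "c \<noteq> c'"
    and uP: "u \<in> P" and vP: "v \<in> P" and uv: "u \<noteq> v"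
    and nopts: "\<forall>p\<in>P. p \<in> convex hull {u,v} \<longrightarrow> p = u \<or> p = v"
    and cuv: "c \<noteq> u" "c \<noteq> v" "c' \<noteq> u" "c' \<noteq> v"
    and z: "z \<in> convex hull {u,v}" "z \<in> convex hull {c,c'}"
    and ne: "{u,v} \<noteq> {a,b}"
  shows "\<exists>y\<in>{{a,b},{a,c},{b,c},{a,c'},{b,c'}}. cross y {u,v}"
proof (cases "v \<in> convex hull {a,b,c} \<union> convex hull {a,b,c'}")
  case False
  then show ?thesis using exit_lemma[OF T t1 t2 Q dist uP vP uv nopts cuv z] by blast
next
  case vin: True
  show ?thesis
  proof (cases "u \<in> convex hull {a,b,c} \<union> convex hull {a,b,c'}")
    case False
    have e: "{v,u} = {u,v}" by (rule insert_commute)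
    have nopts': "\<forall>p\<in>P. p \<in> convex hull {v,u} \<longrightarrow> p = v \<or> p = u" using nopts e by auto
    have z': "z \<in> convex hull {v,u}" using z(1) e by simp
    have "\<exists>y\<in>{{a,b},{a,c},{b,c},{a,c'},{b,c'}}. cross y {v,u}"
      using exit_lemma[OF T t1 t2 Q dist vP uP uv[symmetric] nopts' cuv(2,1,4,3) z' z(2) False] .
    then show ?thesis using e by simp
  next
    case True
    have "u \<in> {a,b,c} \<or> u \<in> {a,b,c'}"
      using True vertex_lemma[OF T t1 uP] vertex_lemma[OF T t2 uP] by blast
    then have "u = a \<or> u = b" using cuv by blast
    moreover have "v \<in> {a,b,c} \<or> v \<in> {a,b,c'}"
      using vin vertex_lemma[OF T t1 vP] vertex_lemma[OF T t2 vP] by blast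
    then have "v = a \<or> v = b" using cuv by blast
    ultimately have "{u,v} = {a,b}" using uv by auto
    then show ?thesis using ne by simp
  qed
qed

lemma flip_struct:
  assumes T: "is_triangulation P T" and T': "is_triangulation P (do_flip T g)"
    and adm: "admissible T g"
  obtains a b c c' where "a \<noteq> b" "g = {a,b}" "{a,b,c} \<in> T" "{a,b,c'} \<in> T" "c \<notin> {a,b}"
    "c' \<notin> {a,b}" "c \<noteq> c'" "convex_quad {a,b,c} {a,b,c'}" "other_diag T g = {c,c'}"
proof -
  from adm obtain t1 t2 where ge: "g \<in> edges T" and t: "t1 \<in> T" "t2 \<in> T" "t1 \<noteq> t2"
    "g \<subseteq> t1" "g \<subseteq> t2" "convex_quad t1 t2"
    unfolding admissible_def by blast
  from edgesD[OF ge] have "card g = 2" by (rule conjunct1)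
  then obtain a b where ab: "g = {a,b}" "a \<noteq> b" by (meson card_2_iff)
  have c1: "card t1 = 3" "card t2 = 3" using tri_tri T t by blast+
  have f1: "finite t1" "finite t2" using c1 by (auto intro: card_ge_0_finite)
  have "card (t1 - g) = 1" using card_Diff_subset[OF finite_subset[OF t(4) f1(1)] t(4)] c1 \<open>card g = 2\<close> by simp
  then obtain c where c: "t1 - g = {c}" by (meson card_1_singletonE)
  have "card (t2 - g) = 1" using card_Diff_subset[OF finite_subset[OF t(5) f1(2)] t(5)] c1 \<open>card g = 2\<close> by simp
  then obtain c' where c': "t2 - g = {c'}" by (meson card_1_singletonE)
  have "t1 = g \<union> (t1 - g)" using t(4) by blast
  also have "\<dots> = g \<union> {c}" by (simp only: c)
  also have "\<dots> = {a,b,c}" using ab by auto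
  finally have t1e: "t1 = {a,b,c}" .
  have "t2 = g \<union> (t2 - g)" using t(5) by blast
  also have "\<dots> = g \<union> {c'}" by (simp only: c')
  also have "\<dots> = {a,b,c'}" using ab by auto
  finally have t2e: "t2 = {a,b,c'}" .
  have "c \<in> t1 - g" "c' \<in> t2 - g" using c c' by simp_all
  then have cab: "c \<notin> {a,b}" "c' \<notin> {a,b}" using ab(1) by simp_all
  have cc: "c \<noteq> c'" using t1e t2e t(3) by auto
  define OD where "OD = other_diag T g"
  have OD: "OD = \<Union> {t\<in>T. g \<subseteq> t} - g" unfolding OD_def other_diag_def by simp
  have "t1 \<in> {t\<in>T. g \<subseteq> t}" "t2 \<in> {t\<in>T. g \<subseteq> t}" using t by simp_all
  moreover have "c \<in> t1" "c \<notin> g" "c' \<in> t2" "c' \<notin> g" using c c' by blast+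
  ultimately have "c \<in> OD" "c' \<in> OD" unfolding OD by (meson DiffI UnionI)+
  then have ccOD: "{c,c'} \<subseteq> OD" by simp
  have "insert a OD \<in> (\<lambda>a. insert a (other_diag T g)) ` g"
    unfolding OD_def by (rule imageI) (simp add: ab)
  then have "insert a OD \<in> do_flip T g" unfolding do_flip_def by (rule UnI2)
  then have c3: "card (insert a OD) = 3" using tri_tri[OF T'] by blast
  have aOD: "a \<notin> OD" using OD ab by simp
  have fOD: "finite OD" using c3 card_ge_0_finite[of "insert a OD"] by simp
  have "card OD = 2" using c3 aOD fOD by simp
  moreover have "card {c,c'} = 2" using cc by simp
  ultimately have "{c,c'} = OD"
    using card_subset_eq[OF fOD ccOD] by simp
  then have "OD = {c,c'}" by simp
  then have OD': "other_diag T g = {c,c'}" using OD_def by simp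
  have A: "{a,b,c} \<in> T" using t(1) t1e by simp
  have B: "{a,b,c'} \<in> T" using t(2) t2e by simp
  have Q: "convex_quad {a,b,c} {a,b,c'}" using t(6) t1e t2e by simp
  show ?thesis using that[OF ab(2) ab(1) A B cab(1) cab(2) cc Q OD'] .
qed

lemma edges_flip:
  assumes "g = {a,b}" "{a,b,c} \<in> T" "{a,b,c'} \<in> T" "other_diag T g = {c,c'}" "c \<noteq> c'"
    and x: "x \<in> edges (do_flip T g)"
  shows "x \<in> edges T \<or> x = {c,c'}"
proof -
  from edgesD[OF x] obtain t where t: "t \<in> do_flip T g" "x \<subseteq> t" and cx: "card x = 2"
    by blast
  show ?thesis
  proof (cases "t \<in> T")
    case True then show ?thesis using edgesI[OF cx True t(2)] by simp
  next
    case False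
    then have "t \<in> (\<lambda>a. insert a (other_diag T g)) ` g" using t(1) unfolding do_flip_def by blast
    then obtain a' where a': "a' \<in> {a,b}" "t = {a',c,c'}"
      using assms(1,4) by blast
    show ?thesis
    proof (cases "{c,c'} \<subseteq> x")
      case True
      have "card {c,c'} = 2" using assms(5) by simp
      then have "{c,c'} = x" using card_seteq[OF card2_finite[OF cx] True] cx by simp
      then show ?thesis by simp
    next
      case False
      then have "x \<subseteq> {a,b,c} \<or> x \<subseteq> {a,b,c'}" using t(2) a' by blast
      then show ?thesis using assms(2,3) edgesI[OF cx] by blast
    qed
  qed
qed

lemma g_not_edge:
  assumes "g = {a,b}" "a \<noteq> b" "c \<notin> {a,b}" "c' \<notin> {a,b}" "other_diag T g = {c,c'}"
  shows "g \<notin> edges (do_flip T g)"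
proof
  assume "g \<in> edges (do_flip T g)"
  then obtain t where t: "t \<in> do_flip T g" "g \<subseteq> t" using edgesD by blast
  then have "t \<notin> {t\<in>T. \<not> g \<subseteq> t}" by blast
  then obtain a' where "a' \<in> g" "t = {a',c,c'}"
    using t(1) assms(5) unfolding do_flip_def by blast
  then have "a \<in> {a',c,c'}" "b \<in> {a',c,c'}" using t(2) assms(1) by auto
  then have "a = a'" "b = a'" using assms(3,4) by auto
  then show False using assms(2) by simp
qed

theorem lemma4:
  fixes P :: "pt set" and Ti Tf :: triangulation and k :: nat and F :: "edge list"
    and C :: "nat set" and i h :: nat
  assumes "is_solution P Ti Tf k F"
    and "normalized Ti Tf F"
    and "C \<in> components Ti F"
    and "i \<in> C" and "h \<in> C" and "i < h"
    and "phi Ti F h = eps F i"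
    and "\<forall>p. i < p \<and> p < h \<longrightarrow> eps F p \<noteq> eps F i"
  shows "(i, h) \<in> (Restr (arcs Ti F) C)\<^sup>+"
proof -
  note sol = assms(1) and comp = assms(3) and iC = assms(4) and hC = assms(5) and ih = assms(6)
    and phih = assms(7) and betw = assms(8)
  define n where "n = length F"
  define A where "A = arcs Ti F"
  define R where "R = Restr A C"
  define Tj where "Tj = Tr Ti F"
  have valid: "valid_seq P Ti F" using sol unfolding is_solution_def by blast
  have triT: "\<And>j. j \<le> n \<Longrightarrow> is_triangulation P (Tj j)"
    using valid unfolding valid_seq_def n_def Tj_def by blast
  have admT: "\<And>q. 1 \<le> q \<Longrightarrow> q \<le> n \<Longrightarrow> admissible (Tj (q - 1)) (eps F q)"
    using valid unfolding valid_seq_def n_def Tj_def by auto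
  have stepT: "\<And>q. 1 \<le> q \<Longrightarrow> q \<le> n \<Longrightarrow> Tj q = do_flip (Tj (q - 1)) (eps F q)"
  proof -
    fix q assume q: "1 \<le> q" "q \<le> n"
    then have "q - 1 < length F" unfolding n_def by simp
    then have "Tr Ti F (Suc (q - 1)) = do_flip (Tr Ti F (q - 1)) (eps F (Suc (q - 1)))" by (rule Tr_Suc)
    then show "Tj q = do_flip (Tj (q - 1)) (eps F q)" using q unfolding Tj_def by simp
  qed
  have phiT: "\<And>q. phi Ti F q = other_diag (Tj (q - 1)) (eps F q)" unfolding phi_def Tj_def by simp
  obtain i0 where i0: "i0 \<in> {1..n}"
    and Ceq: "C = {j \<in> {1..n}. (i0, j) \<in> (A \<union> A\<inverse>)\<^sup>*}"
    using comp unfolding components_def A_def n_def by blast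
  have Cn: "\<And>j. j \<in> C \<Longrightarrow> 1 \<le> j \<and> j \<le> n" using Ceq by auto
  have closeC: "\<And>p q. p \<in> C \<Longrightarrow> (p, q) \<in> A \<Longrightarrow> q \<in> C"
  proof -
    fix p q assume p: "p \<in> C" and pq: "(p, q) \<in> A"
    then have adj: "adjacent Ti F p q" unfolding A_def arcs_def by simp
    then have "1 \<le> q" "q \<le> n" unfolding adjacent_def n_def by auto
    moreover have "(i0, p) \<in> (A \<union> A\<inverse>)\<^sup>*" using p Ceq by blast
    then have "(i0, q) \<in> (A \<union> A\<inverse>)\<^sup>*" using pq by (meson UnI1 rtrancl.rtrancl_into_rtrancl)
    ultimately show "q \<in> C" using Ceq by auto
  qed
  have i1: "1 \<le> i" "i \<le> n" using Cn iC by auto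
  have hn: "h \<le> n" using Cn hC by auto
  define e where "e = eps F i"
  have admi: "admissible (Tj (i - 1)) e" using admT i1 unfolding e_def by simp
  then have eE: "e \<in> edges (Tj (i - 1))" unfolding admissible_def by blast
  have triI: "is_triangulation P (Tj (i - 1))" using triT i1 by simp
  obtain et where et: "et \<in> Tj (i - 1)" "e \<subseteq> et" and ce: "card e = 2" using edgesD[OF eE] by blast
  obtain u v where uv: "e = {u,v}" "u \<noteq> v" using ce by (meson card_2_iff)
  have uvP: "u \<in> P" "v \<in> P" using tri_tri(1)[OF triI et(1)] et(2) uv by auto
  have nopts: "\<forall>p\<in>P. p \<in> convex hull {u,v} \<longrightarrow> p = u \<or> p = v"
    using edge_nopts[OF triI eE] uv by auto
  define INV where "INV = (\<lambda>j. \<forall>x \<in> edges (Tj j). cross e x \<longrightarrow>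
     (\<exists>p. i \<le> p \<and> p \<le> j \<and> p \<in> C \<and> (p = i \<or> (i, p) \<in> R\<^sup>+) \<and> phi Ti F p = x \<and>
        (\<forall>r. p < r \<and> r \<le> j \<longrightarrow> eps F r \<noteq> x)))"
  have inv: "j < h \<longrightarrow> INV j" if "i \<le> j" for j
    using that
  proof (induction j rule: nat_induct_at_least)
    case base
    show ?case
    proof
      assume "i < h"
      have Ti1: "Tj i = do_flip (Tj (i - 1)) e" using stepT i1 unfolding e_def by simp
      have triI': "is_triangulation P (do_flip (Tj (i - 1)) e)" using triT[OF i1(2)] Ti1 by simp
      obtain a b c c' where fs: "a \<noteq> b" "e = {a,b}" "{a,b,c} \<in> Tj (i - 1)" "{a,b,c'} \<in> Tj (i - 1)"
        "c \<notin> {a,b}" "c' \<notin> {a,b}" "c \<noteq> c'" "convex_quad {a,b,c} {a,b,c'}"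
        "other_diag (Tj (i - 1)) e = {c,c'}"
        using flip_struct[OF triI triI' admi] by blast
      show "INV i" unfolding INV_def
      proof (intro ballI impI)
        fix x assume x: "x \<in> edges (Tj i)" and cx: "cross e x"
        have "x \<in> edges (Tj (i - 1)) \<or> x = {c,c'}"
          using edges_flip[OF fs(2) fs(3) fs(4) fs(9) fs(7)] x Ti1 by simp
        moreover have "x \<notin> edges (Tj (i - 1))" using nocross[OF triI eE] cx by blast
        ultimately have "x = phi Ti F i" using fs(9) phiT[of i] unfolding e_def by simp
        then show "\<exists>p. i \<le> p \<and> p \<le> i \<and> p \<in> C \<and> (p = i \<or> (i, p) \<in> R\<^sup>+) \<and> phi Ti F p = x \<and>
          (\<forall>r. p < r \<and> r \<le> i \<longrightarrow> eps F r \<noteq> x)"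
          using iC by (intro exI[of _ i]) auto
      qed
    qed
  next
    case (Suc j)
    show ?case
    proof
      assume qh: "Suc j < h"
      define q where "q = Suc j"
      have IH: "INV j" using Suc qh by simp
      have q: "1 \<le> q" "q \<le> n" "q - 1 = j" using qh hn unfolding q_def by auto
      define g where "g = eps F q"
      have admq: "admissible (Tj j) g" using admT[OF q(1,2)] q(3) unfolding g_def by simp
      have Tq: "Tj q = do_flip (Tj j) g" using stepT[OF q(1,2)] q(3) unfolding g_def by simp
      have triJ: "is_triangulation P (Tj j)" using triT q by simp
      have triQ: "is_triangulation P (do_flip (Tj j) g)" using triT[OF q(2)] Tq by simp
      have ge: "g \<noteq> e" using betw Suc.hyps qh unfolding g_def e_def q_def by simp
      obtain a b c c' where fs: "a \<noteq> b" "g = {a,b}" "{a,b,c} \<in> Tj j" "{a,b,c'} \<in> Tj j"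
        "c \<notin> {a,b}" "c' \<notin> {a,b}" "c \<noteq> c'" "convex_quad {a,b,c} {a,b,c'}"
        "other_diag (Tj j) g = {c,c'}"
        using flip_struct[OF triJ triQ admq] by blast
      have phiq: "phi Ti F q = {c,c'}" using phiT[of q] q(3) fs(9) unfolding g_def by simp
      have gnot: "g \<notin> edges (Tj q)" using g_not_edge[OF fs(2) fs(1) fs(5) fs(6) fs(9)] Tq by simp
      have "INV q" unfolding INV_def
      proof (intro ballI impI)
        fix x assume x: "x \<in> edges (Tj q)" and cx: "cross e x"
        have "x \<in> edges (Tj j) \<or> x = {c,c'}"
          using edges_flip[OF fs(2) fs(3) fs(4) fs(9) fs(7)] x Tq by simp
        then show "\<exists>p. i \<le> p \<and> p \<le> q \<and> p \<in> C \<and> (p = i \<or> (i, p) \<in> R\<^sup>+) \<and> phi Ti F p = x \<and>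
          (\<forall>r. p < r \<and> r \<le> q \<longrightarrow> eps F r \<noteq> x)"
        proof
          assume xj: "x \<in> edges (Tj j)"
          then obtain p where p: "i \<le> p" "p \<le> j" "p \<in> C" "p = i \<or> (i, p) \<in> R\<^sup>+" "phi Ti F p = x"
            "\<forall>r. p < r \<and> r \<le> j \<longrightarrow> eps F r \<noteq> x"
            using IH cx unfolding INV_def by blast
          have "x \<noteq> g" using x gnot by blast
          then have "\<forall>r. p < r \<and> r \<le> q \<longrightarrow> eps F r \<noteq> x"
            using p(6) unfolding g_def q_def by (metis le_Suc_eq)
          then show ?thesis using p unfolding q_def by (intro exI[of _ p]) auto
        next
          assume xcc: "x = {c,c'}"
          from cx obtain z where z: "z \<in> convex hull e" "z \<in> convex hull {c,c'}"
            and dj: "e \<inter> {c,c'} = {}" unfolding cross_def xcc by blast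
          have cuv: "c \<noteq> u" "c \<noteq> v" "c' \<noteq> u" "c' \<noteq> v" using dj uv by auto
          have ne: "{u,v} \<noteq> {a,b}"
          proof
            assume "{u,v} = {a,b}"
            then show False using ge fs(2) uv(1) by simp
          qed
          have z1: "z \<in> convex hull {u,v}" using z(1) uv(1) by simp
          have "\<exists>y\<in>{{a,b},{a,c},{b,c},{a,c'},{b,c'}}. cross y {u,v}"
            using geo_lemma[OF triJ fs(3) fs(4) fs(8) fs(1) fs(5) fs(6) fs(7) uvP uv(2) nopts cuv z1 z(2) ne] .
          then obtain y where y: "y \<in> {{a,b},{a,c},{b,c},{a,c'},{b,c'}}" and cy: "cross y {u,v}"
            by (rule bexE)
          have cey: "cross e y" using cross_sym[OF cy] uv(1) by simp
          have dd: "a \<noteq> c" "b \<noteq> c" "a \<noteq> c'" "b \<noteq> c'" using fs(5,6) by auto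
          have "y \<subseteq> {a,b,c} \<or> y \<subseteq> {a,b,c'}" using y by blast
          moreover have "g \<subseteq> {a,b,c}" "g \<subseteq> {a,b,c'}" using fs(2) by auto
          ultimately have yt: "\<exists>t\<in>Tj j. y \<subseteq> t \<and> g \<subseteq> t" using fs(3,4) by blast
          from y consider "y = {a,b}" | "y = {a,c}" | "y = {b,c}" | "y = {a,c'}" | "y = {b,c'}" by blast
          then have cy2: "card y = 2" using dd fs(1) by cases simp_all
          have yE: "y \<in> edges (Tj j)" using yt cy2 edgesI by blast
          obtain p where p: "i \<le> p" "p \<le> j" "p \<in> C" "p = i \<or> (i, p) \<in> R\<^sup>+" "phi Ti F p = y"
            "\<forall>r. p < r \<and> r \<le> j \<longrightarrow> eps F r \<noteq> y"
            using IH yE cey unfolding INV_def by blast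
          have cg2: "card g = 2" using fs(1,2) by simp
          have "phi Ti F p = eps F q \<or> share_triangle (Tr Ti F (q - 1)) (phi Ti F p) (eps F q)"
          proof (cases "y = g")
            case True then show ?thesis using p(5) unfolding g_def by simp
          next
            case False
            then have "share_triangle (Tj j) y g" unfolding share_triangle_def
              by (intro conjI) (rule False, rule cy2, rule cg2, rule yt)
            then show ?thesis using p(5) q(3) unfolding g_def Tj_def by simp
          qed
          moreover have "\<not> (\<exists>r. p < r \<and> r < q \<and> eps F r = phi Ti F p)"
            using p(5,6) unfolding q_def by auto
          moreover have a1: "1 \<le> p" "p < q" "q \<le> length F" using p(1,2) i1 q(2) unfolding q_def n_def by auto
          ultimately have "adjacent Ti F p q" unfolding adjacent_def
            by (intro conjI) (rule a1(1), rule a1(2), rule a1(3), assumption, assumption)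
          then have pqA: "(p, q) \<in> A" unfolding A_def arcs_def by simp
          have qC: "q \<in> C" using closeC[OF p(3) pqA] .
          have pqR: "(p, q) \<in> R" unfolding R_def using pqA p(3) qC by simp
          have iq: "(i, q) \<in> R\<^sup>+" using p(4) pqR by (metis r_into_trancl trancl_into_trancl)
          have "i \<le> q" using p(1,2) unfolding q_def by simp
          moreover have "phi Ti F q = x" using phiq xcc by simp
          moreover have "\<forall>r. q < r \<and> r \<le> q \<longrightarrow> eps F r \<noteq> x"
          proof (intro allI impI)
            fix r assume "q < r \<and> r \<le> q"
            then have False by linarith
            then show "eps F r \<noteq> x" by simp
          qed
          ultimately show ?thesis using qC iq by blast
        qed
      qed
      then show "INV (Suc j)" unfolding q_def .
    qed
  qed
  have invh: "INV (h - 1)" using inv[of "h - 1"] ih by simp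
  have h1: "1 \<le> h" using ih i1 by simp
  define g where "g = eps F h"
  have admh: "admissible (Tj (h - 1)) g" using admT[OF h1 hn] unfolding g_def .
  have Th: "Tj h = do_flip (Tj (h - 1)) g" using stepT[OF h1 hn] unfolding g_def .
  have triH: "is_triangulation P (Tj (h - 1))" using triT hn by simp
  have triH': "is_triangulation P (do_flip (Tj (h - 1)) g)" using triT[OF hn] Th by simp
  obtain a b c c' where fs: "a \<noteq> b" "g = {a,b}" "{a,b,c} \<in> Tj (h - 1)" "{a,b,c'} \<in> Tj (h - 1)"
    "c \<notin> {a,b}" "c' \<notin> {a,b}" "c \<noteq> c'" "convex_quad {a,b,c} {a,b,c'}"
    "other_diag (Tj (h - 1)) g = {c,c'}"
    using flip_struct[OF triH triH' admh] by blast
  have ecc: "e = {c,c'}" using phih phiT[of h] fs(9) unfolding e_def g_def by simp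
  have "cross e g" unfolding cross_def ecc fs(2)
    using diag_cross[OF fs(8) fs(7) fs(5) fs(6)] fs(5,6) by blast
  moreover have gE: "g \<in> edges (Tj (h - 1))" using admh unfolding admissible_def by blast
  ultimately obtain p where p: "i \<le> p" "p \<le> h - 1" "p \<in> C" "p = i \<or> (i, p) \<in> R\<^sup>+" "phi Ti F p = g"
    "\<forall>r. p < r \<and> r \<le> h - 1 \<longrightarrow> eps F r \<noteq> g"
    using invh unfolding INV_def by blast
  have "adjacent Ti F p h" unfolding adjacent_def
    using p i1 hn ih unfolding g_def n_def by auto
  then have "(p, h) \<in> A" unfolding A_def arcs_def by simp
  then have "(p, h) \<in> R" unfolding R_def using p(3) hC by simp
  then have "(i, h) \<in> R\<^sup>+" using p(4) by (metis r_into_trancl trancl_into_trancl)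
  then show ?thesis unfolding R_def A_def .
qed

end
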